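(* Let $H = -\Delta + V$ on $\ell^2(\mathbb{Z}^d)$, with $V$ a real-valued potential, and let $E$ be an eigenvalue of $H$ having two linearly independent eigenfunctions $\varphi_1,\varphi_2\in\ell^2(\mathbb{Z}^d)$, each with $\beta$-decay for some $\beta > \frac d2$. Then there exists a constant $C = C_{d,\beta,\varphi_1,\varphi_2}<\infty$ (depending only on $d,\beta,\varphi_1,\varphi_2$) such that, setting $\varepsilon_L = C L^{-\beta+\frac d2}$ and $J_L = [E-\varepsilon_L, E+\varepsilon_L]$, we have $\operatorname{tr}\chi_{J_L}(H_L)\ge 2$ for all sufficiently large $L$.
   Context: $\Delta(x,y)=1$ if $|x-y|=1$ and $\Delta(x,y)=0$ otherwise; $V$ acts by multiplication. Write $\langle x\rangle=\sqrt{1+|x|^2}$; $\varphi\in\ell^2(\mathbb{Z}^d)$ has $\beta$-decay if $|\varphi(x)|\le C_\varphi\langle x\rangle^{-\beta}$ for all $x$ and some $C_\varphi<\infty$. For $L>0$, $\Lambda_L$ is the open box in $\mathbb{Z}^d$ centered at the origin with side of length $L$, $\chi_L$ its characteristic function, and $H_L=\chi_L H\chi_L$ is the restriction of $H$ to $\ell^2(\Lambda_L)$ with zero boundary conditions outside $\Lambda_L$ (identifying $\ell^2(\Lambda_L)$ with $\chi_L\ell^2(\mathbb{Z}^d)$). For a set $J$, $\chi_J$ denotes its characteristic function, so $\chi_J(H_L)$ is the spectral projection of $H_L$ onto $J$. *)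

theory Defs
  imports "HOL-Analysis.Analysis" "HOL-Library.Function_Algebras"
begin

text \<open>Points of Z^d are integer vectors of type int ^ 'd, with d = CARD('d).\<close>

definition znorm :: "int ^ 'd \<Rightarrow> real" where
  "znorm x = sqrt (\<Sum>i\<in>UNIV. (real_of_int (x $ i))^2)"

definition jbr :: "int ^ 'd \<Rightarrow> real" where
  "jbr x = sqrt (1 + (znorm x)^2)"

definition adj :: "int ^ 'd \<Rightarrow> int ^ 'd \<Rightarrow> bool" where
  "adj x y \<longleftrightarrow> znorm (x - y) = 1"

definition Hop :: "(int ^ 'd \<Rightarrow> real) \<Rightarrow> (int ^ 'd \<Rightarrow> complex) \<Rightarrow> int ^ 'd \<Rightarrow> complex" where
  "Hop V f x = - (\<Sum>y | adj x y. f y) + complex_of_real (V x) * f x"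

definition l2 :: "(int ^ 'd \<Rightarrow> complex) \<Rightarrow> bool" where
  "l2 f \<longleftrightarrow> (\<lambda>x. (norm (f x))^2) summable_on UNIV"

definition has_decay :: "real \<Rightarrow> (int ^ 'd \<Rightarrow> complex) \<Rightarrow> bool" where
  "has_decay \<beta> f \<longleftrightarrow> (\<exists>C. \<forall>x. norm (f x) \<le> C * jbr x powr (- \<beta>))"

definition box_L :: "real \<Rightarrow> (int ^ 'd) set" where
  "box_L L = {x. \<forall>i. 2 * \<bar>real_of_int (x $ i)\<bar> < L}"

definition chi :: "'a set \<Rightarrow> ('a \<Rightarrow> complex) \<Rightarrow> 'a \<Rightarrow> complex" where
  "chi A f x = (if x \<in> A then f x else 0)"

definition H_L :: "(int ^ 'd \<Rightarrow> real) \<Rightarrow> real \<Rightarrow> (int ^ 'd \<Rightarrow> complex) \<Rightarrow> int ^ 'd \<Rightarrow> complex" where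
  "H_L V L f = chi (box_L L) (Hop V (chi (box_L L) f))"

definition fscale :: "complex \<Rightarrow> ('a \<Rightarrow> complex) \<Rightarrow> 'a \<Rightarrow> complex" where
  "fscale c f = (\<lambda>x. c * f x)"

text \<open>tr chi_J(H_L): the rank (= trace) of the spectral projection of the self-adjoint
  operator H_L on l^2(Lambda_L) onto J, i.e. the dimension of the span of all eigenvectors of
  H_L in l^2(Lambda_L) with eigenvalue in J (the range of chi_J(H_L)).\<close>
definition tr_spec_proj :: "(int ^ 'd \<Rightarrow> real) \<Rightarrow> real \<Rightarrow> real set \<Rightarrow> nat" where
  "tr_spec_proj V L J =
     vector_space.dim fscale
       (module.span fscale
         {f. (\<forall>x. x \<notin> box_L L \<longrightarrow> f x = 0) \<and> f \<noteq> 0 \<and>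
             (\<exists>e\<in>J. H_L V L f = fscale (complex_of_real e) f)})"

end

theory Submission
  imports Defs "HOL-Computational_Algebra.Fundamental_Theorem_Algebra"
begin


lemma vs_fscale: "vector_space (fscale :: complex \<Rightarrow> ('a \<Rightarrow> complex) \<Rightarrow> _)"
  by unfold_locales (auto simp: fscale_def fun_eq_iff algebra_simps)

interpretation FS: vector_space "fscale :: complex \<Rightarrow> ('a \<Rightarrow> complex) \<Rightarrow> _"
  by (rule vs_fscale)

lemma sum_fun_app: "(\<Sum>i\<in>I. (F i :: 'a \<Rightarrow> 'b::comm_monoid_add)) x = (\<Sum>i\<in>I. F i x)"
  by (induction I rule: infinite_finite_induct) auto

lemma fscale_app[simp]: "fscale c f x = c * f x"
  by (simp add: fscale_def)

lemma fscale_0[simp]: "fscale 0 f = 0" "fscale c 0 = 0"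
  by (auto simp: fscale_def fun_eq_iff)

lemma fscale_1[simp]: "fscale 1 f = f"
  by (auto simp: fscale_def fun_eq_iff)

lemma fscale_eq_0: "fscale c f = 0 \<Longrightarrow> c \<noteq> 0 \<Longrightarrow> f = 0"
  by (auto simp: fscale_def fun_eq_iff)

definition ip :: "'a set \<Rightarrow> ('a \<Rightarrow> complex) \<Rightarrow> ('a \<Rightarrow> complex) \<Rightarrow> complex" where
  "ip B f g = (\<Sum>x\<in>B. cnj (f x) * g x)"

definition Sp :: "'a set \<Rightarrow> ('a \<Rightarrow> complex) set" where
  "Sp B = {f. \<forall>x. x \<notin> B \<longrightarrow> f x = 0}"

definition nn :: "'a set \<Rightarrow> ('a \<Rightarrow> complex) \<Rightarrow> real" where
  "nn B f = (\<Sum>x\<in>B. (cmod (f x))^2)"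

lemma ip_self: "ip B f f = complex_of_real (nn B f)"
  unfolding ip_def nn_def of_real_sum
  by (intro sum.cong refl) (metis complex_norm_square mult.commute)

lemma nn_nonneg: "nn B f \<ge> 0"
  unfolding nn_def by (intro sum_nonneg) auto

lemma ip_add_right: "ip B f (g + h) = ip B f g + ip B f h"
  by (simp add: ip_def algebra_simps sum.distrib)
lemma ip_add_left: "ip B (g + h) f = ip B g f + ip B h f"
  by (simp add: ip_def algebra_simps sum.distrib)
lemma ip_diff_right: "ip B f (g - h) = ip B f g - ip B f h"
  by (simp add: ip_def algebra_simps sum_subtractf)
lemma ip_diff_left: "ip B (g - h) f = ip B g f - ip B h f"
  by (simp add: ip_def algebra_simps sum_subtractf)
lemma ip_scale_right: "ip B f (fscale c g) = c * ip B f g"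
  by (simp add: ip_def sum_distrib_left algebra_simps)
lemma ip_scale_left: "ip B (fscale c g) f = cnj c * ip B g f"
  by (simp add: ip_def sum_distrib_left algebra_simps)
lemma ip_sum_right: "ip B f (\<Sum>i\<in>I. G i) = (\<Sum>i\<in>I. ip B f (G i))"
  by (simp add: ip_def sum_fun_app sum_distrib_left sum.swap[of _ B])
lemma ip_sum_left: "ip B (\<Sum>i\<in>I. G i) f = (\<Sum>i\<in>I. ip B (G i) f)"
  by (simp add: ip_def sum_fun_app sum_distrib_right sum.swap[of _ B])
lemma ip_cnj: "cnj (ip B f g) = ip B g f"
  by (simp add: ip_def mult.commute)
lemma ip_zero_right[simp]: "ip B f 0 = 0"
  by (simp add: ip_def)

lemma nn_zero: assumes "finite B" "f \<in> Sp B" "nn B f = 0" shows "f = 0"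
proof
  fix x show "f x = 0 x"
  proof (cases "x \<in> B")
    case True
    have "(cmod (f x))^2 = 0"
      using assms(3) sum_nonneg_eq_0_iff[OF assms(1), of "\<lambda>x. (cmod (f x))^2"] True
      unfolding nn_def by auto
    then show ?thesis by simp
  next
    case False then show ?thesis using assms(2) by (auto simp: Sp_def)
  qed
qed

lemma nn_pos: assumes "finite B" "f \<in> Sp B" "f \<noteq> 0" shows "nn B f > 0"
  using nn_zero[OF assms(1,2)] nn_nonneg[of B f] assms(3) by fastforce

definition subsp :: "('a \<Rightarrow> complex) set \<Rightarrow> bool" where
  "subsp U \<longleftrightarrow> 0 \<in> U \<and> (\<forall>f\<in>U. \<forall>g\<in>U. f + g \<in> U) \<and> (\<forall>c. \<forall>f\<in>U. fscale c f \<in> U)"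

lemma subsp_sum: "subsp U \<Longrightarrow> (\<And>i. i \<in> I \<Longrightarrow> F i \<in> U) \<Longrightarrow> (\<Sum>i\<in>I. F i) \<in> U"
  by (induction I rule: infinite_finite_induct) (auto simp: subsp_def)

lemma subsp_diff: "subsp U \<Longrightarrow> f \<in> U \<Longrightarrow> g \<in> U \<Longrightarrow> f - g \<in> U"
proof -
  assume U: "subsp U" "f \<in> U" "g \<in> U"
  have e: "f - g = f + fscale (-1) g" by (auto simp: fun_eq_iff)
  have "f + fscale (-1) g \<in> U" using U unfolding subsp_def by blast
  then show ?thesis by (simp only: e)
qed

definition delta :: "'a \<Rightarrow> 'a \<Rightarrow> complex" where
  "delta x = (\<lambda>y. if y = x then 1 else 0)"

lemma Sp_span: assumes "finite B" shows "Sp B \<subseteq> FS.span (delta ` B)"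
proof
  fix f assume f: "f \<in> Sp B"
  have "f = (\<Sum>x\<in>B. fscale (f x) (delta x))"
  proof
    fix y
    show "f y = (\<Sum>x\<in>B. fscale (f x) (delta x)) y"
      using f assms by (auto simp: sum_fun_app delta_def Sp_def if_distrib cong: if_cong)
  qed
  also have "\<dots> \<in> FS.span (delta ` B)"
    by (intro FS.span_sum FS.span_scale FS.span_base) auto
  finally show "f \<in> FS.span (delta ` B)" .
qed

lemma indep_card_le: assumes "finite B" "FS.independent S" "S \<subseteq> Sp B"
  shows "finite S \<and> card S \<le> card B"
proof -
  have "finite S \<and> card S \<le> card (delta ` B)"
    using FS.independent_span_bound[of "delta ` B" S] assms Sp_span[OF assms(1)] by auto
  moreover have "card (delta ` B) \<le> card B" using assms(1) card_image_le by blast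
  ultimately show ?thesis by linarith
qed

locale hermop =
  fixes B :: "'a set" and A :: "('a \<Rightarrow> complex) \<Rightarrow> ('a \<Rightarrow> complex)"
  assumes finB: "finite B"
  and lin_add: "\<And>f g. A (f + g) = A f + A g"
  and lin_scale: "\<And>c f. A (fscale c f) = fscale c (A f)"
  and maps: "\<And>f. A f \<in> Sp B"
  and herm: "\<And>f g. f \<in> Sp B \<Longrightarrow> g \<in> Sp B \<Longrightarrow> ip B f (A g) = ip B (A f) g"
begin

lemma A_zero[simp]: "A 0 = 0"
  using lin_scale[of 0 0] by simp

lemma A_sum: "A (\<Sum>i\<in>I. F i) = (\<Sum>i\<in>I. A (F i))"
proof (induction I rule: infinite_finite_induct)
  case (insert x J)
  have "A (sum F (insert x J)) = A (F x + sum F J)" using sum.insert[OF insert(1,2), of F] by (rule arg_cong)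
  also have "\<dots> = A (F x) + (\<Sum>i\<in>J. A (F i))" by (simp only: lin_add insert.IH)
  also have "\<dots> = (\<Sum>i\<in>insert x J. A (F i))" using sum.insert[OF insert(1,2), of "\<lambda>i. A (F i)"] by simp
  finally show ?case .
qed (simp_all only: sum.empty sum.infinite A_zero not_False_eq_True)

lemma A_diff: "A (f - g) = A f - A g"
proof -
  have e: "f - g = f + fscale (-1) g" by (auto simp: fun_eq_iff)
  have "A (f - g) = A f + fscale (-1) (A g)" by (simp only: e lin_add lin_scale)
  also have "\<dots> = A f - A g" by (auto simp: fun_eq_iff)
  finally show ?thesis .
qed

definition peval :: "complex poly \<Rightarrow> ('a \<Rightarrow> complex) \<Rightarrow> ('a \<Rightarrow> complex)" where
  "peval p f = (\<Sum>k\<le>degree p. fscale (coeff p k) ((A ^^ k) f))"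

lemma peval_upto: assumes "degree p \<le> N"
  shows "peval p f = (\<Sum>k\<le>N. fscale (coeff p k) ((A ^^ k) f))"
  unfolding peval_def
  by (rule sum.mono_neutral_left) (use assms in \<open>auto simp: coeff_eq_0\<close>)

lemma peval_add: "peval (p + q) f = peval p f + peval q f"
proof -
  define N where "N = max (degree p) (degree q)"
  have "degree (p + q) \<le> N" unfolding N_def by (rule degree_add_le) auto
  then show ?thesis
    by (simp add: peval_upto[of _ N] N_def sum.distrib[symmetric] fscale_def algebra_simps fun_eq_iff sum_fun_app)
qed

lemma peval_smult: "peval (smult c p) f = fscale c (peval p f)"
  by (simp add: peval_upto[of _ "degree p"] fscale_def sum_fun_app fun_eq_iff sum_distrib_left algebra_simps)

lemma peval_pCons0: "peval (pCons 0 p) f = A (peval p f)"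
proof -
  have d: "degree (pCons 0 p) \<le> Suc (degree p)" by (simp add: degree_pCons_le)
  have "peval (pCons 0 p) f = (\<Sum>k\<le>Suc (degree p). fscale (coeff (pCons 0 p) k) ((A ^^ k) f))"
    by (rule peval_upto[OF d])
  also have "\<dots> = (\<Sum>k\<le>degree p. fscale (coeff p k) ((A ^^ Suc k) f))"
    by (subst sum.atMost_Suc_shift) simp
  also have "\<dots> = A (peval p f)"
    unfolding peval_def A_sum by (simp add: lin_scale)
  finally show ?thesis .
qed

lemma peval_one: "peval 1 f = f"
  by (simp add: peval_def)

lemma peval_lin: "peval ([:-x, 1:] * q) f = A (peval q f) - fscale x (peval q f)"
proof -
  have "[:-x, 1:] * q = pCons 0 q + smult (-x) q"
    by (simp add: algebra_simps)
  then have "peval ([:-x, 1:] * q) f = A (peval q f) + fscale (-x) (peval q f)"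
    by (simp only: peval_add peval_smult peval_pCons0)
  also have "\<dots> = A (peval q f) - fscale x (peval q f)" by (auto simp: fun_eq_iff)
  finally show ?thesis .
qed

lemma pow_in: "subsp U \<Longrightarrow> (\<forall>g\<in>U. A g \<in> U) \<Longrightarrow> f \<in> U \<Longrightarrow> (A ^^ k) f \<in> U"
  by (induction k) auto

lemma peval_in: "subsp U \<Longrightarrow> (\<forall>g\<in>U. A g \<in> U) \<Longrightarrow> f \<in> U \<Longrightarrow> peval p f \<in> U"
  unfolding peval_def
  by (intro subsp_sum) (use pow_in in \<open>auto simp: subsp_def\<close>)

lemma eig_from_prod:
  assumes U: "subsp U" "\<forall>g\<in>U. A g \<in> U"
  shows "v \<in> U \<Longrightarrow> v \<noteq> 0 \<Longrightarrow> peval (\<Prod>x\<in>#M. [:-x, 1:]) v = 0 \<Longrightarrow>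
     \<exists>u\<in>U. u \<noteq> 0 \<and> (\<exists>\<mu>. A u = fscale \<mu> u)"
proof (induction M)
  case empty
  then show ?case by (simp add: peval_one)
next
  case (add x M)
  define w where "w = peval (\<Prod>x\<in>#M. [:-x, 1:]) v"
  show ?case
  proof (cases "w = 0")
    case True then show ?thesis using add unfolding w_def by blast
  next
    case False
    have "(\<Prod>x\<in>#add_mset x M. [:-x, 1:]) = [:-x, 1:] * (\<Prod>x\<in>#M. [:-x, 1:])" by simp
    then have "A w - fscale x w = 0" using add.prems(3) by (simp only: peval_lin w_def)
    then have "A w = fscale x w" by simp
    moreover have "w \<in> U" unfolding w_def by (rule peval_in[OF U add.prems(1)])
    ultimately show ?thesis using False by blast
  qed
qed

end


lemma Sp_subsp: "subsp (Sp B)"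
  by (auto simp: subsp_def Sp_def)

lemma Sp_FS_subspace: "FS.subspace (Sp B)"
  unfolding FS.subspace_def by (auto simp: Sp_def)

context hermop begin

lemma eig_exists:
  assumes U: "subsp U" "\<forall>g\<in>U. A g \<in> U" "U \<subseteq> Sp B" and v: "v \<in> U" "v \<noteq> 0"
  shows "\<exists>u\<in>U. u \<noteq> 0 \<and> (\<exists>\<mu>. A u = fscale \<mu> u)"
proof -
  define n where "n = card B"
  define X where "X k = (A ^^ k) v" for k
  have XSp: "X k \<in> Sp B" for k using pow_in[OF U(1,2) v(1)] U(3) unfolding X_def by auto
  obtain c where c: "\<exists>k\<le>n. c k \<noteq> 0" "(\<Sum>k\<le>n. fscale (c k) (X k)) = 0"
  proof (cases "inj_on X {..n}")
    case True
    have "\<not> FS.independent (X ` {..n})"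
    proof
      assume ind: "FS.independent (X ` {..n})"
      have "card (X ` {..n}) \<le> card B" using indep_card_le[OF finB ind] XSp by auto
      moreover have "card (X ` {..n}) = n + 1" using card_image[OF True] by simp
      ultimately show False unfolding n_def by simp
    qed
    then obtain t u where tu: "finite t" "t \<subseteq> X ` {..n}" "(\<Sum>w\<in>t. fscale (u w) w) = 0"
      "\<exists>w\<in>t. u w \<noteq> 0"
      unfolding FS.dependent_explicit by blast
    define c where "c k = (if X k \<in> t then u (X k) else 0)" for k
    have "(\<Sum>k\<le>n. fscale (c k) (X k)) = (\<Sum>w\<in>X ` {..n}. fscale (if w \<in> t then u w else 0) w)"
      by (subst sum.reindex[OF True]) (simp add: c_def)
    also have "\<dots> = (\<Sum>w\<in>X ` {..n}. if w \<in> t then fscale (u w) w else 0)"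
      by (intro sum.cong refl) auto
    also have "\<dots> = (\<Sum>w\<in>X ` {..n} \<inter> t. fscale (u w) w)"
      using sum.inter_restrict[of "X ` {..n}" "\<lambda>w. fscale (u w) w" t] by simp
    also have "X ` {..n} \<inter> t = t" using tu(2) by blast
    also have "(\<Sum>w\<in>t. fscale (u w) w) = 0" by (rule tu(3))
    finally have "(\<Sum>k\<le>n. fscale (c k) (X k)) = 0" .
    moreover have "\<exists>k\<le>n. c k \<noteq> 0"
    proof -
      obtain w where w: "w \<in> t" "u w \<noteq> 0" using tu(4) by blast
      then obtain k where "k \<le> n" "w = X k" using tu(2) by blast
      then show ?thesis using w unfolding c_def by auto
    qed
    ultimately show ?thesis using that by blast
  next
    case False
    then obtain i j where ij: "i \<le> n" "j \<le> n" "i \<noteq> j" "X i = X j"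
      unfolding inj_on_def by auto
    define c :: "nat \<Rightarrow> complex" where "c k = (if k = i then 1 else if k = j then -1 else 0)" for k
    have "fscale (c k) (X k) = (if k = i then X i else 0) - (if k = j then X j else 0)" for k
      using ij by (auto simp: c_def fun_eq_iff)
    then have "(\<Sum>k\<le>n. fscale (c k) (X k)) =
        (\<Sum>k\<le>n. (if k = i then X i else 0)) - (\<Sum>k\<le>n. (if k = j then X j else 0))"
      by (simp add: sum_subtractf)
    also have "\<dots> = 0" using ij by simp
    finally have s0: "(\<Sum>k\<le>n. fscale (c k) (X k)) = 0" .
    have "c i \<noteq> 0" by (simp add: c_def)
    then have "\<exists>k\<le>n. c k \<noteq> 0" using ij(1) by blast
    then show ?thesis using that[of c] s0 by blast
  qed
  define p where "p = (\<Sum>k\<le>n. monom (c k) k)"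
  have coeffp: "coeff p k = (if k \<le> n then c k else 0)" for k
    by (simp add: p_def coeff_sum coeff_monom)
  have deg: "degree p \<le> n" using coeffp by (intro degree_le) auto
  have p0: "p \<noteq> 0" using c(1) coeffp by (metis coeff_0)
  have "peval p v = (\<Sum>k\<le>n. fscale (coeff p k) ((A ^^ k) v))" by (rule peval_upto[OF deg])
  also have "\<dots> = (\<Sum>k\<le>n. fscale (c k) (X k))" by (intro sum.cong refl) (simp add: coeffp X_def)
  finally have pv: "peval p v = 0" using c(2) by simp
  obtain M where M: "p = smult (lead_coeff p) (\<Prod>x\<in>#M. [:-x, 1:])"
    using alg_closed_imp_factorization[OF p0] by blast
  have "fscale (lead_coeff p) (peval (\<Prod>x\<in>#M. [:-x, 1:]) v) = 0"
    using pv M peval_smult by metis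
  then have "peval (\<Prod>x\<in>#M. [:-x, 1:]) v = 0"
    using fscale_eq_0 p0 by auto
  then show ?thesis using eig_from_prod[OF U(1,2) v] by blast
qed

end

lemma Sp_scale: "f \<in> Sp B \<Longrightarrow> fscale c f \<in> Sp B"
  by (simp add: Sp_def fscale_def)

context hermop begin
lemma eig_real:
  assumes "u \<in> Sp B" "u \<noteq> 0" "A u = fscale \<mu> u"
  shows "complex_of_real (Re \<mu>) = \<mu>"
proof -
  have "ip B u (A u) = ip B (A u) u" by (rule herm[OF assms(1) assms(1)])
  then have "\<mu> * ip B u u = cnj \<mu> * ip B u u" by (simp only: assms(3) ip_scale_right ip_scale_left)
  moreover have "ip B u u \<noteq> 0" using nn_pos[OF finB assms(1,2)] by (simp add: ip_self)
  ultimately have mc: "\<mu> = cnj \<mu>" by (metis mult_cancel_right)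
  have "Im \<mu> = 0" using arg_cong[OF mc, of Im] by simp
  then show ?thesis by (simp add: complex_eq_iff)
qed

definition onb :: "('a \<Rightarrow> complex) set \<Rightarrow> bool" where
  "onb S \<longleftrightarrow> finite S \<and> S \<subseteq> Sp B \<and> (\<forall>s\<in>S. ip B s s = 1) \<and>
     (\<forall>s\<in>S. \<forall>t\<in>S. s \<noteq> t \<longrightarrow> ip B s t = 0) \<and> (\<forall>s\<in>S. \<exists>l::real. A s = fscale (of_real l) s)"

lemma onb_subset: assumes "onb S" "t \<subseteq> S" shows "onb t"
proof -
  have a: "finite S" "S \<subseteq> Sp B" "\<forall>s\<in>S. ip B s s = 1"
     "\<forall>s\<in>S. \<forall>t\<in>S. s \<noteq> t \<longrightarrow> ip B s t = 0" "\<forall>s\<in>S. \<exists>l::real. A s = fscale (of_real l) s"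
    using assms(1) unfolding onb_def by auto
  have "finite t" using a(1) assms(2) by (rule finite_subset[rotated])
  moreover have "t \<subseteq> Sp B" using a(2) assms(2) by (rule order_trans[rotated])
  moreover have "\<forall>s\<in>t. ip B s s = 1" using a(3) assms(2) by (meson subsetD)
  moreover have "\<forall>s\<in>t. \<forall>t'\<in>t. s \<noteq> t' \<longrightarrow> ip B s t' = 0" using a(4) assms(2) by (meson subsetD)
  moreover have "\<forall>s\<in>t. \<exists>l::real. A s = fscale (of_real l) s" using a(5) assms(2) by (meson subsetD)
  ultimately show ?thesis unfolding onb_def by (intro conjI)
qed

lemma onb_delta:
  assumes "onb S" "s0 \<in> S"
  shows "(\<Sum>s\<in>S. d s * ip B s0 s) = d s0"
proof -
  have "(\<Sum>s\<in>S. d s * ip B s0 s) = (\<Sum>s\<in>S. if s = s0 then d s0 else 0)"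
    using assms unfolding onb_def by (intro sum.cong refl) auto
  also have "\<dots> = d s0" using assms unfolding onb_def by simp
  finally show ?thesis .
qed

lemma onb_delta':
  assumes "onb S" "s0 \<in> S"
  shows "(\<Sum>s\<in>S. d s * ip B s s0) = d s0"
proof -
  have "(\<Sum>s\<in>S. d s * ip B s s0) = (\<Sum>s\<in>S. if s = s0 then d s0 else 0)"
    using assms unfolding onb_def by (intro sum.cong refl) auto
  also have "\<dots> = d s0" using assms unfolding onb_def by simp
  finally show ?thesis .
qed

lemma onb_indep: assumes "onb S" shows "FS.independent S"
proof
  assume "FS.dependent S"
  then obtain t u where tu: "finite t" "t \<subseteq> S" "(\<Sum>w\<in>t. fscale (u w) w) = 0" "\<exists>w\<in>t. u w \<noteq> 0"
    unfolding FS.dependent_explicit by blast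
  then obtain w0 where w0: "w0 \<in> t" "u w0 \<noteq> 0" by blast
  have ot: "onb t" using onb_subset[OF assms tu(2)] .
  have "ip B w0 (\<Sum>w\<in>t. fscale (u w) w) = (\<Sum>w\<in>t. u w * ip B w0 w)"
    by (simp add: ip_sum_right ip_scale_right)
  also have "\<dots> = u w0" by (rule onb_delta[OF ot w0(1)])
  finally show False using tu(3) w0(2) by simp
qed

lemma parseval:
  assumes "onb S"
  shows "ip B (\<Sum>s\<in>S. fscale (d s) s) (\<Sum>s\<in>S. fscale (e s) s) = (\<Sum>s\<in>S. cnj (d s) * e s)"
proof -
  have "ip B (\<Sum>s\<in>S. fscale (d s) s) (\<Sum>s\<in>S. fscale (e s) s)
      = (\<Sum>s\<in>S. e s * (\<Sum>t\<in>S. cnj (d t) * ip B t s))"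
    by (simp only: ip_sum_right ip_scale_right ip_sum_left ip_scale_left)
  also have "\<dots> = (\<Sum>s\<in>S. cnj (d s) * e s)"
    by (intro sum.cong refl) (simp add: onb_delta'[OF assms])
  finally show ?thesis .
qed

lemma onb_card: assumes "onb S" shows "card S \<le> card B"
proof -
  have "S \<subseteq> Sp B" using assms unfolding onb_def by blast
  then show ?thesis using indep_card_le[OF finB onb_indep[OF assms]] by blast
qed

lemma max_onb: "\<exists>S. onb S \<and> (\<forall>S'. onb S' \<longrightarrow> card S' \<le> card S)"
proof -
  have "onb {}" by (simp add: onb_def)
  moreover have "\<forall>S. onb S \<longrightarrow> card S < card B + 1" using onb_card by (simp add: less_Suc_eq_le)
  ultimately show ?thesis by (rule Lattices_Big.ex_has_greatest_nat)
qed

lemma onb_complete: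
  assumes S: "onb S" and mx: "\<forall>S'. onb S' \<longrightarrow> card S' \<le> card S" and w: "w \<in> Sp B"
  shows "w = (\<Sum>s\<in>S. fscale (ip B s w) s)"
proof (rule ccontr)
  define r where "r = w - (\<Sum>s\<in>S. fscale (ip B s w) s)"
  assume "w \<noteq> (\<Sum>s\<in>S. fscale (ip B s w) s)"
  then have r0: "r \<noteq> 0" unfolding r_def by simp
  have SSp: "S \<subseteq> Sp B" using S unfolding onb_def by blast
  have rSp: "r \<in> Sp B" unfolding r_def
    by (intro subsp_diff[OF Sp_subsp] w subsp_sum[OF Sp_subsp] Sp_scale) (use SSp in blast)
  define U where "U = {f \<in> Sp B. \<forall>s\<in>S. ip B s f = 0}"
  have rU: "r \<in> U"
  proof -
    have "ip B s r = 0" if s: "s \<in> S" for s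
    proof -
      have "ip B s r = ip B s w - (\<Sum>t\<in>S. ip B t w * ip B s t)"
        unfolding r_def by (simp add: ip_diff_right ip_sum_right ip_scale_right)
      also have "\<dots> = 0" by (simp add: onb_delta[OF S s])
      finally show ?thesis .
    qed
    then show ?thesis using rSp unfolding U_def by blast
  qed
  have subU: "subsp U"
    unfolding U_def subsp_def by (auto simp: Sp_def ip_add_right ip_scale_right)
  have invU: "\<forall>g\<in>U. A g \<in> U"
  proof
    fix g assume g: "g \<in> U"
    have "ip B s (A g) = 0" if s: "s \<in> S" for s
    proof -
      obtain l where l: "A s = fscale (of_real l) s" using S s unfolding onb_def by blast
      have "ip B s (A g) = ip B (A s) g" using herm SSp s g unfolding U_def by blast
      also have "\<dots> = 0" using g s unfolding l U_def by (simp add: ip_scale_left)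
      finally show ?thesis .
    qed
    then show "A g \<in> U" using maps unfolding U_def by blast
  qed
  obtain u \<mu> where u: "u \<in> U" "u \<noteq> 0" "A u = fscale \<mu> u"
    using eig_exists[OF subU invU _ rU r0] unfolding U_def by blast
  have uSp: "u \<in> Sp B" using u(1) unfolding U_def by blast
  define m where "m = Re \<mu>"
  have mu: "\<mu> = of_real m" using eig_real[OF uSp u(2,3)] unfolding m_def by simp
  define nu where "nu = nn B u"
  have nupos: "nu > 0" using nn_pos[OF finB uSp u(2)] unfolding nu_def .
  define u' where "u' = fscale (of_real (1 / sqrt nu)) u"
  have u'U: "u' \<in> U" using u(1) subU unfolding u'_def subsp_def by blast
  have u'n: "ip B u' u' = 1"
  proof -
    have "ip B u' u' = of_real (1 / sqrt nu) * (cnj (of_real (1 / sqrt nu)) * ip B u u)"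
      unfolding u'_def by (simp only: ip_scale_left ip_scale_right)
    also have "\<dots> = of_real (1 / sqrt nu) * of_real (1 / sqrt nu) * of_real nu"
      by (simp only: ip_self nu_def complex_cnj_complex_of_real mult.assoc)

    also have "\<dots> = of_real ((1 / sqrt nu) * (1 / sqrt nu) * nu)" by (simp only: of_real_mult)
    also have "(1 / sqrt nu) * (1 / sqrt nu) * nu = 1" using nupos
      by (simp add: field_simps)
    finally show ?thesis by simp
  qed
  have u'eig: "A u' = fscale (of_real m) u'"
    unfolding u'_def lin_scale u(3) mu by (simp add: fscale_def fun_eq_iff)
  have u'S: "u' \<notin> S"
  proof
    assume "u' \<in> S"
    then have "ip B u' u' = 0" using u'U unfolding U_def by blast
    then show False using u'n by simp
  qed
  have "onb (insert u' S)"
    unfolding onb_def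
  proof (intro conjI ballI impI)
    show "finite (insert u' S)" using S unfolding onb_def by simp
    show "insert u' S \<subseteq> Sp B" using SSp u'U unfolding U_def by blast
    show "ip B s s = 1" if "s \<in> insert u' S" for s using that u'n S unfolding onb_def by auto
    show "\<exists>l::real. A s = fscale (of_real l) s" if "s \<in> insert u' S" for s
      using that u'eig S unfolding onb_def by auto
    show "ip B s t = 0" if "s \<in> insert u' S" "t \<in> insert u' S" "s \<noteq> t" for s t
    proof -
      have o1: "ip B s u' = 0" if "s \<in> S" for s using u'U that unfolding U_def by blast
      have o2: "ip B u' s = 0" if "s \<in> S" for s using o1[OF that] ip_cnj[of B s u'] by simp
      show ?thesis using that o1 o2 S unfolding onb_def by auto
    qed
  qed
  moreover have "card (insert u' S) = card S + 1" using u'S S unfolding onb_def by simp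
  ultimately show False using mx by fastforce
qed


lemma cnj_mult_self: "cnj z * z = complex_of_real ((cmod z)^2)"
  by (metis complex_norm_square mult.commute of_real_power)

lemma two_dim:
  assumes psi: "\<psi>1 \<in> Sp B" "\<psi>2 \<in> Sp B" and eps: "\<epsilon> \<ge> 0"
  and ind: "\<forall>a b. fscale a \<psi>1 + fscale b \<psi>2 = 0 \<longrightarrow> a = 0 \<and> b = 0"
  and approx: "\<forall>a b. nn B (A (fscale a \<psi>1 + fscale b \<psi>2) - fscale (of_real E) (fscale a \<psi>1 + fscale b \<psi>2))
        \<le> \<epsilon>^2 * nn B (fscale a \<psi>1 + fscale b \<psi>2)"
  shows "2 \<le> FS.dim (FS.span {f. (\<forall>x. x \<notin> B \<longrightarrow> f x = 0) \<and> f \<noteq> 0 \<and>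
             (\<exists>e\<in>{E - \<epsilon>..E + \<epsilon>}. A f = fscale (complex_of_real e) f)})"
proof -
  obtain S where S: "onb S" and mx: "\<forall>S'. onb S' \<longrightarrow> card S' \<le> card S" using max_onb by blast
  have SSp: "S \<subseteq> Sp B" and finS: "finite S" using S unfolding onb_def by auto
  define lam where "lam s = (SOME l::real. A s = fscale (of_real l) s)" for s
  have lam: "A s = fscale (of_real (lam s)) s" if "s \<in> S" for s
  proof -
    have "\<exists>l::real. A s = fscale (of_real l) s" using S that unfolding onb_def by blast
    then show ?thesis unfolding lam_def by (rule someI_ex)
  qed
  define K where "K = {s\<in>S. \<bar>lam s - E\<bar> \<le> \<epsilon>}"
  have finK: "finite K" using finS unfolding K_def by simp
  define X where "X = {f. (\<forall>x. x \<notin> B \<longrightarrow> f x = 0) \<and> f \<noteq> 0 \<and>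
             (\<exists>e\<in>{E - \<epsilon>..E + \<epsilon>}. A f = fscale (complex_of_real e) f)}"
  have KX: "K \<subseteq> X"
  proof
    fix s assume s: "s \<in> K"
    then have sS: "s \<in> S" unfolding K_def by blast
    have "s \<in> Sp B" using sS SSp by blast
    moreover have "s \<noteq> 0"
    proof
      assume "s = 0"
      then have "ip B s s = 0" by simp
      moreover have "ip B s s = 1" using S sS unfolding onb_def by blast
      ultimately show False by simp
    qed
    moreover have "lam s \<in> {E - \<epsilon>..E + \<epsilon>}" using s unfolding K_def by auto
    ultimately show "s \<in> X" unfolding X_def Sp_def using lam[OF sS] by blast
  qed
  show ?thesis
  proof (cases "2 \<le> card K")
    case True
    have "\<not> (\<forall>a\<in>K. \<forall>b\<in>K. a = b)" using True card_le_Suc0_iff_eq[OF finK] by auto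
    then obtain s1 s2 where s12: "s1 \<in> K" "s2 \<in> K" "s1 \<noteq> s2" by blast
    have "{s1, s2} \<subseteq> S" using s12 unfolding K_def by blast
    then have ind2: "FS.independent {s1, s2}" using FS.independent_mono[OF onb_indep[OF S]] by blast
    obtain Bs where Bs: "Bs \<subseteq> FS.span X" "FS.independent Bs" "FS.span X \<subseteq> FS.span Bs"
        "card Bs = FS.dim (FS.span X)"
      using FS.basis_exists by blast
    have "X \<subseteq> Sp B" unfolding X_def Sp_def by blast
    then have "FS.span X \<subseteq> Sp B" by (rule FS.span_minimal[OF _ Sp_FS_subspace])
    then have finBs: "finite Bs" using indep_card_le[OF finB Bs(2)] Bs(1) by blast
    have "{s1, s2} \<subseteq> FS.span X" using KX s12 FS.span_base by blast
    then have "{s1, s2} \<subseteq> FS.span Bs" using Bs(3) by blast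
    then have "card {s1, s2} \<le> card Bs" using FS.independent_span_bound[OF finBs ind2] by blast
    then show ?thesis using s12 Bs(4) unfolding X_def by simp
  next
    case False
    then have cK: "card K \<le> Suc 0" by simp
    then have Kall: "\<forall>a\<in>K. \<forall>b\<in>K. a = b" using card_le_Suc0_iff_eq[OF finK] by blast
    obtain a b where ab: "\<not> (a = 0 \<and> b = 0)" "\<forall>k\<in>K. ip B k (fscale a \<psi>1 + fscale b \<psi>2) = 0"
    proof (cases "K = {}")
      case True then show ?thesis using that[of 1 0] by simp
    next
      case False
      then obtain k where kK: "k \<in> K" by blast
      then have K1: "K = {k}" using Kall by blast
      show ?thesis
      proof (cases "ip B k \<psi>1 = 0 \<and> ip B k \<psi>2 = 0")
        case True then show ?thesis using that[of 1 0] K1 by (simp add: ip_add_right ip_scale_right)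
      next
        case False
        have "ip B k (fscale (ip B k \<psi>2) \<psi>1 + fscale (- ip B k \<psi>1) \<psi>2)
           = ip B k \<psi>2 * ip B k \<psi>1 + (- ip B k \<psi>1) * ip B k \<psi>2"
          by (simp only: ip_add_right ip_scale_right)
        then have "ip B k (fscale (ip B k \<psi>2) \<psi>1 + fscale (- ip B k \<psi>1) \<psi>2) = 0"
          by (simp add: mult.commute)
        then show ?thesis using that[of "ip B k \<psi>2" "- ip B k \<psi>1"] K1 False by auto
      qed
    qed
    define w where "w = fscale a \<psi>1 + fscale b \<psi>2"
    have w0: "w \<noteq> 0" using ind ab(1) unfolding w_def by blast
    have wSp: "w \<in> Sp B" using psi unfolding w_def Sp_def by (simp add: fscale_app)
    define c where "c s = ip B s w" for s
    have wexp: "w = (\<Sum>s\<in>S. fscale (c s) s)" using onb_complete[OF S mx wSp] unfolding c_def .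
    have cK0: "c s = 0" if "s \<in> K" for s using ab(2) that unfolding c_def w_def by blast
    have Aw: "A w - fscale (of_real E) w = (\<Sum>s\<in>S. fscale (c s * (of_real (lam s) - of_real E)) s)"
    proof -
      have "A w = (\<Sum>s\<in>S. fscale (c s) (A s))"
        by (subst wexp) (simp only: A_sum lin_scale)
      also have "\<dots> = (\<Sum>s\<in>S. fscale (c s * of_real (lam s)) s)"
        by (intro sum.cong refl) (simp add: lam fscale_def fun_eq_iff)
      finally have 1: "A w = (\<Sum>s\<in>S. fscale (c s * of_real (lam s)) s)" .
      have 2: "fscale (of_real E) w = (\<Sum>s\<in>S. fscale (c s * of_real E) s)"
        by (subst wexp) (simp add: fscale_def fun_eq_iff sum_fun_app sum_distrib_left algebra_simps)
      show ?thesis unfolding 1 2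
        by (simp add: fscale_def fun_eq_iff sum_fun_app sum_subtractf algebra_simps)
    qed
    have nnw: "nn B w = (\<Sum>s\<in>S. (cmod (c s))^2)"
    proof -
      have "complex_of_real (nn B w) = ip B w w" by (simp add: ip_self)
      also have "\<dots> = (\<Sum>s\<in>S. cnj (c s) * c s)"
        by (subst (1 2) wexp) (rule parseval[OF S])
      also have "\<dots> = complex_of_real (\<Sum>s\<in>S. (cmod (c s))^2)"
        by (simp add: cnj_mult_self)
      finally show ?thesis by (simp only: of_real_eq_iff)
    qed
    have nnAw: "nn B (A w - fscale (of_real E) w) = (\<Sum>s\<in>S. (cmod (c s))^2 * (lam s - E)^2)"
    proof -
      have "complex_of_real (nn B (A w - fscale (of_real E) w))
          = ip B (A w - fscale (of_real E) w) (A w - fscale (of_real E) w)" by (simp add: ip_self)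
      also have "\<dots> = (\<Sum>s\<in>S. cnj (c s * (of_real (lam s) - of_real E)) * (c s * (of_real (lam s) - of_real E)))"
        by (subst (1 2) Aw) (rule parseval[OF S])
      also have "\<dots> = (\<Sum>s\<in>S. complex_of_real ((cmod (c s))^2 * (lam s - E)^2))"
      proof (intro sum.cong refl)
        fix s
        define d where "d = c s * (of_real (lam s) - of_real E)"
        have "cnj d * d = of_real ((cmod d)^2)" by (rule cnj_mult_self)
        also have "cmod d = cmod (c s) * \<bar>lam s - E\<bar>"
          unfolding d_def by (simp only: norm_mult of_real_diff[symmetric] norm_of_real)
        also have "(cmod (c s) * \<bar>lam s - E\<bar>)^2 = (cmod (c s))^2 * (lam s - E)^2"
          by (simp add: power_mult_distrib)
        finally show "cnj (c s * (of_real (lam s) - of_real E)) * (c s * (of_real (lam s) - of_real E))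
           = complex_of_real ((cmod (c s))^2 * (lam s - E)^2)" unfolding d_def .
      qed
      also have "\<dots> = complex_of_real (\<Sum>s\<in>S. (cmod (c s))^2 * (lam s - E)^2)"
        by (simp only: of_real_sum)
      finally show ?thesis by (simp only: of_real_eq_iff)
    qed
    have "nn B w > 0" using nn_pos[OF finB wSp w0] .
    then obtain s0 where s0: "s0 \<in> S" "c s0 \<noteq> 0"
      unfolding nnw by (metis (no_types, lifting) norm_zero power_zero_numeral sum.neutral less_irrefl)
    have s0K: "s0 \<notin> K" using cK0 s0 by blast
    have gt: "\<epsilon>^2 < (lam s - E)^2" if "s \<in> S" "s \<notin> K" for s
    proof -
      have "\<epsilon> < \<bar>lam s - E\<bar>" using that unfolding K_def by auto
      then have "\<epsilon>^2 < \<bar>lam s - E\<bar>^2" using eps by (intro power_strict_mono) auto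
      then show ?thesis by simp
    qed
    have "\<epsilon>^2 * nn B w = (\<Sum>s\<in>S. (cmod (c s))^2 * \<epsilon>^2)"
      unfolding nnw by (simp add: sum_distrib_left mult.commute)
    also have "\<dots> < (\<Sum>s\<in>S. (cmod (c s))^2 * (lam s - E)^2)"
    proof (rule sum_strict_mono_ex1[OF finS])
      show "\<forall>s\<in>S. (cmod (c s))^2 * \<epsilon>^2 \<le> (cmod (c s))^2 * (lam s - E)^2"
      proof
        fix s assume sS: "s \<in> S"
        show "(cmod (c s))^2 * \<epsilon>^2 \<le> (cmod (c s))^2 * (lam s - E)^2"
        proof (cases "s \<in> K")
          case True then show ?thesis using cK0 by simp
        next
          case False then show ?thesis using gt[OF sS False] by (intro mult_left_mono) auto
        qed
      qed
      show "\<exists>s\<in>S. (cmod (c s))^2 * \<epsilon>^2 < (cmod (c s))^2 * (lam s - E)^2"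
        using s0 gt[OF s0(1) s0K] by (intro bexI[of _ s0]) auto
    qed
    also have "\<dots> = nn B (A w - fscale (of_real E) w)" using nnAw by simp
    finally show ?thesis using approx[rule_format, of a b] unfolding w_def by simp
  qed
qed
end


lemma vecset_finite_card:
  assumes "finite S"
  shows "finite {x::int^'d. \<forall>i. x$i \<in> S} \<and> card {x::int^'d. \<forall>i. x$i \<in> S} \<le> card S ^ CARD('d)"
proof -
  have sub: "{x::int^'d. \<forall>i. x$i \<in> S} \<subseteq> vec_lambda ` (PiE UNIV (\<lambda>_. S))"
  proof
    fix x :: "int^'d" assume "x \<in> {x. \<forall>i. x$i \<in> S}"
    then have "vec_nth x \<in> PiE UNIV (\<lambda>_. S)" by (auto simp: PiE_iff)
    moreover have "x = vec_lambda (vec_nth x)" by simp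
    ultimately show "x \<in> vec_lambda ` (PiE UNIV (\<lambda>_. S))" by blast
  qed
  have fin: "finite (PiE (UNIV::'d set) (\<lambda>_. S))" using assms by (intro finite_PiE) auto
  have "card (PiE (UNIV::'d set) (\<lambda>_. S)) = card S ^ CARD('d)"
    by (simp add: card_PiE)
  moreover have "card {x::int^'d. \<forall>i. x$i \<in> S} \<le> card (vec_lambda ` (PiE (UNIV::'d set) (\<lambda>_. S)))"
    using sub fin by (intro card_mono) auto
  moreover have "card (vec_lambda ` (PiE (UNIV::'d set) (\<lambda>_. S))) \<le> card (PiE (UNIV::'d set) (\<lambda>_. S))"
    using fin by (rule card_image_le)
  ultimately show ?thesis using sub fin finite_subset by fastforce
qed

lemma sq_le_znorm: "(real_of_int (x$i))^2 \<le> (znorm x)^2"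
proof -
  have "(real_of_int (x$i))^2 \<le> (\<Sum>j\<in>UNIV. (real_of_int (x $ j))^2)"
    by (rule member_le_sum) auto
  also have "\<dots> = (znorm x)^2" unfolding znorm_def by (simp add: sum_nonneg)
  finally show ?thesis .
qed

lemma znorm_nonneg: "znorm x \<ge> 0"
  unfolding znorm_def by (simp add: sum_nonneg)

lemma abs_le_znorm: "\<bar>real_of_int (x$i)\<bar> \<le> znorm x"
  using sq_le_znorm[of x i] znorm_nonneg[of x] by (metis abs_le_square_iff abs_of_nonneg)

lemma jbr_ge_znorm: "znorm x \<le> jbr x"
proof -
  have "znorm x = sqrt ((znorm x)^2)" using znorm_nonneg[of x] by simp
  also have "\<dots> \<le> jbr x" unfolding jbr_def by (intro real_sqrt_le_mono) simp
  finally show ?thesis .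
qed

lemma jbr_pos: "jbr x > 0"
  unfolding jbr_def by (simp add: add_pos_nonneg)

lemma adj_bound: "adj x y \<Longrightarrow> \<bar>y$i - x$i\<bar> \<le> 1"
proof -
  assume "adj x y"
  then have "znorm (x - y) = 1" by (simp add: adj_def)
  then have "\<bar>real_of_int ((x - y)$i)\<bar> \<le> 1" using abs_le_znorm[of "x - y" i] by simp
  then show ?thesis by simp
qed

lemma adj_sym: "adj x y = adj y x"
proof -
  have "znorm (x - y) = znorm (y - x)"
    unfolding znorm_def by (intro arg_cong[where f=sqrt] sum.cong refl) (simp add: power2_commute)
  then show ?thesis by (simp add: adj_def)
qed

lemma finite_adj: "finite {y::int^'d. adj x y}"
proof -
  define T where "T = (\<Union>i. {x$i - 1 .. x$i + 1})"
  have fT: "finite T" unfolding T_def by simp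
  have "{y::int^'d. adj x y} \<subseteq> {y. \<forall>i. y$i \<in> T}"
  proof (intro subsetI CollectI allI)
    fix y i assume "y \<in> {y. adj x y}"
    then have "\<bar>y$i - x$i\<bar> \<le> 1" using adj_bound by blast
    then have "y$i \<in> {x$i - 1 .. x$i + 1}" by auto
    then show "y$i \<in> T" unfolding T_def by blast
  qed
  then show ?thesis using vecset_finite_card[OF fT] finite_subset by blast
qed

definition Nd :: "('d::finite) itself \<Rightarrow> nat" where
  "Nd _ = card {z::int^'d. znorm z = 1}"

lemma card_adj: "card {y::int^'d. adj x y} = Nd TYPE('d)"
proof -
  have "{y::int^'d. adj x y} = (\<lambda>z. x - z) ` {z. znorm z = 1}"
  proof (intro set_eqI iffI)
    fix y assume "y \<in> {y. adj x y}"
    then show "y \<in> (\<lambda>z. x - z) ` {z. znorm z = 1}"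
      by (intro image_eqI[of _ _ "x - y"]) (auto simp: adj_def)
  next
    fix y assume "y \<in> (\<lambda>z. x - z) ` {z. znorm z = 1}"
    then show "y \<in> {y. adj x y}" by (auto simp: adj_def)
  qed
  moreover have "inj (\<lambda>z::int^'d. x - z)" by (intro injI) simp
  ultimately show ?thesis unfolding Nd_def by (simp add: card_image inj_on_subset)
qed

lemma box_eq: "box_L L = {x::int^'d. \<forall>i. x$i \<in> {k. 2 * \<bar>real_of_int k\<bar> < L}}"
  unfolding box_L_def by simp

lemma box_finite_card:
  assumes "L \<ge> 1"
  shows "finite (box_L L :: (int^'d) set) \<and> real (card (box_L L :: (int^'d) set)) \<le> (5 * L) ^ CARD('d)"
proof -
  define S where "S = {k::int. 2 * \<bar>real_of_int k\<bar> < L}"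
  define m where "m = \<lceil>L\<rceil>"
  have S: "S \<subseteq> {-m..m}"
  proof
    fix k assume "k \<in> S"
    then have "\<bar>real_of_int k\<bar> < L" unfolding S_def by simp
    then have "\<bar>real_of_int k\<bar> < real_of_int m" unfolding m_def using le_of_int_ceiling less_le_trans by blast
    then have "\<bar>k\<bar> < m" by linarith
    then show "k \<in> {-m..m}" by auto
  qed
  have fS: "finite S" using S finite_subset by blast
  have "card S \<le> card {-m..m}" using S by (intro card_mono) auto
  then have "real (card S) \<le> real (nat (2 * m + 1))" by simp
  also have "\<dots> = 2 * real_of_int m + 1" unfolding m_def using assms by (simp add: of_nat_nat)
  also have "\<dots> \<le> 5 * L" unfolding m_def using assms by linarith
  finally have cS: "real (card S) \<le> 5 * L" .
  have "finite (box_L L :: (int^'d) set)" "card (box_L L :: (int^'d) set) \<le> card S ^ CARD('d)"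
    using vecset_finite_card[OF fS, where 'd='d] unfolding box_eq S_def by auto
  moreover have "real (card S ^ CARD('d)) \<le> (5 * L) ^ CARD('d)"
    using power_mono[OF cS, of "CARD('d)"] by simp
  ultimately show ?thesis by (meson of_nat_le_iff order_trans)
qed

lemma jbr_out: "y \<notin> box_L L \<Longrightarrow> L / 2 \<le> jbr y"
proof -
  assume "y \<notin> box_L L"
  then obtain i where "2 * \<bar>real_of_int (y$i)\<bar> \<ge> L" unfolding box_L_def by (auto simp: not_less)
  then have "L / 2 \<le> \<bar>real_of_int (y$i)\<bar>" by simp
  also have "\<dots> \<le> znorm y" by (rule abs_le_znorm)
  also have "\<dots> \<le> jbr y" by (rule jbr_ge_znorm)
  finally show ?thesis .
qed

lemma Hop_add: "Hop V (f + g) = Hop V f + Hop V g"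
  by (simp add: Hop_def fun_eq_iff sum.distrib algebra_simps)

lemma Hop_scale: "Hop V (fscale c f) = fscale c (Hop V f)"
  by (simp add: Hop_def fun_eq_iff fscale_def sum_distrib_left algebra_simps)

lemma chi_add: "chi A (f + g) = chi A f + chi A g"
  by (simp add: chi_def fun_eq_iff)

lemma chi_scale: "chi A (fscale c f) = fscale c (chi A f)"
  by (simp add: chi_def fun_eq_iff fscale_def)

lemma chi_Sp: "f \<in> Sp A \<Longrightarrow> chi A f = f"
  by (auto simp: chi_def Sp_def fun_eq_iff)

lemma adj_sum:
  assumes "finite A" "g \<in> Sp A"
  shows "(\<Sum>y | adj x y. g y) = (\<Sum>y\<in>A. if adj x y then g y else 0)"
proof -
  have "(\<Sum>y | adj x y. g y) = (\<Sum>y\<in>{y. adj x y} \<inter> A. g y)"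
    using assms(2) finite_adj[of x] by (intro sum.mono_neutral_right) (auto simp: Sp_def)
  also have "\<dots> = (\<Sum>y\<in>A. if adj x y then g y else 0)"
    using sum.inter_restrict[OF assms(1), of g "{y. adj x y}"] by (simp add: Int_commute)
  finally show ?thesis .
qed

lemma hermop_HL: "hermop (box_L L :: (int^'d) set) (H_L V L)"
proof
  let ?B = "box_L L :: (int^'d) set"
  have finB: "finite ?B"
  proof (cases "L \<ge> 1")
    case True then show ?thesis using box_finite_card by blast
  next
    case False
    have "?B \<subseteq> box_L 1"
    proof
      fix x assume "x \<in> ?B"
      then have "2 * \<bar>real_of_int (x$i)\<bar> < L" for i unfolding box_L_def by blast
      then have "2 * \<bar>real_of_int (x$i)\<bar> < 1" for i using False by (meson less_trans not_le)
      then show "x \<in> box_L 1" unfolding box_L_def by blast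
    qed
    then show ?thesis using box_finite_card[of 1] finite_subset by blast
  qed
  show "finite ?B" by (rule finB)
  show "H_L V L (f + g) = H_L V L f + H_L V L g" for f g
    by (simp only: H_L_def chi_add Hop_add)
  show "H_L V L (fscale c f) = fscale c (H_L V L f)" for c f
    by (simp only: H_L_def chi_scale Hop_scale)
  show "H_L V L f \<in> Sp ?B" for f by (simp add: H_L_def chi_def Sp_def)
  show "ip ?B f (H_L V L g) = ip ?B (H_L V L f) g" if f: "f \<in> Sp ?B" and g: "g \<in> Sp ?B" for f g
  proof -
    define K where "K = (\<Sum>x\<in>?B. \<Sum>y\<in>?B. if adj x y then cnj (f x) * g y else 0)"
    define D where "D = (\<Sum>x\<in>?B. cnj (f x) * complex_of_real (V x) * g x)"
    have "ip ?B f (H_L V L g) = (\<Sum>x\<in>?B. cnj (f x) * Hop V g x)"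
      unfolding ip_def H_L_def chi_Sp[OF g] by (intro sum.cong refl) (simp add: chi_def)
    also have "\<dots> = (\<Sum>x\<in>?B. - (\<Sum>y\<in>?B. if adj x y then cnj (f x) * g y else 0)
                    + cnj (f x) * complex_of_real (V x) * g x)"
      unfolding Hop_def adj_sum[OF finB g]
      by (intro sum.cong refl) (simp add: algebra_simps sum_distrib_left if_distrib cong: if_cong)
    also have "\<dots> = - K + D" unfolding K_def D_def by (simp add: sum.distrib sum_negf sum_subtractf)
    finally have 1: "ip ?B f (H_L V L g) = - K + D" .
    have "ip ?B (H_L V L f) g = (\<Sum>x\<in>?B. cnj (Hop V f x) * g x)"
      unfolding ip_def H_L_def chi_Sp[OF f] by (intro sum.cong refl) (simp add: chi_def)
    also have "\<dots> = (\<Sum>x\<in>?B. - (\<Sum>y\<in>?B. if adj x y then cnj (f y) * g x else 0)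
                    + cnj (f x) * complex_of_real (V x) * g x)"
      unfolding Hop_def adj_sum[OF finB f]
      by (intro sum.cong refl) (simp add: algebra_simps sum_distrib_right sum_distrib_left if_distrib cong: if_cong)
    also have "(\<Sum>x\<in>?B. - (\<Sum>y\<in>?B. if adj x y then cnj (f y) * g x else 0)
                    + cnj (f x) * complex_of_real (V x) * g x)
        = - (\<Sum>x\<in>?B. \<Sum>y\<in>?B. if adj x y then cnj (f y) * g x else 0) + D"
      unfolding D_def by (simp add: sum.distrib sum_negf sum_subtractf)
    also have "(\<Sum>x\<in>?B. \<Sum>y\<in>?B. if adj x y then cnj (f y) * g x else 0) = K"
      unfolding K_def by (subst sum.swap) (simp add: adj_sym)
    finally show ?thesis using 1 by simp
  qed
qed



lemma powr_ident:
  assumes L: "L > 0"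
  shows "(5 * L) ^ n * ((L / 2) powr (- \<beta>))^2 = (5 powr (real n / 2) * 2 powr \<beta> * L powr (- \<beta> + real n / 2))^2"
proof -
  have "(5 * L) ^ n = exp (real n * (ln 5 + ln L))"
    using L by (simp add: powr_realpow[symmetric] powr_def ln_mult exp_add[symmetric] distrib_left)
  moreover have "((L / 2) powr (- \<beta>))^2 = exp (2 * (- \<beta> * (ln L - ln 2)))"
    using L by (simp add: powr_def ln_div power2_eq_square exp_add[symmetric])
  moreover have "(5 powr (real n / 2) * 2 powr \<beta> * L powr (- \<beta> + real n / 2))^2
      = exp (2 * (real n / 2 * ln 5 + \<beta> * ln 2 + (- \<beta> + real n / 2) * ln L))"
    using L by (simp add: powr_def power2_eq_square exp_add[symmetric] algebra_simps)
  ultimately show ?thesis by (simp add: exp_add[symmetric] algebra_simps)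
qed

lemma chi_in: "x \<in> A \<Longrightarrow> chi A f x = f x"
  by (simp add: chi_def)

lemma boundary:
  fixes \<phi> :: "int^'d \<Rightarrow> complex"
  assumes eig: "Hop V \<phi> = fscale (of_real E) \<phi>"
  and dec: "\<forall>y. cmod (\<phi> y) \<le> M * jbr y powr (- \<beta>)" and M: "M \<ge> 0" and b: "\<beta> \<ge> 0"
  and L: "L \<ge> 1"
  shows "nn (box_L L) (H_L V L (chi (box_L L) \<phi>) - fscale (of_real E) (chi (box_L L) \<phi>))
     \<le> (5 * L) ^ CARD('d) * (real (Nd TYPE('d)) * M * (L / 2) powr (- \<beta>))^2"
proof -
  define B where "B = (box_L L :: (int^'d) set)"
  define Q where "Q = real (Nd TYPE('d)) * M * (L / 2) powr (- \<beta>)"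
  have Q0: "Q \<ge> 0" unfolding Q_def using M by simp
  have fB: "finite B" and cB: "real (card B) \<le> (5 * L) ^ CARD('d)"
    using box_finite_card[OF L] unfolding B_def by auto
  have pt: "cmod ((H_L V L (chi B \<phi>) - fscale (of_real E) (chi B \<phi>)) x) \<le> Q" if x: "x \<in> B" for x
  proof -
    have cc: "chi B (chi B \<phi>) = chi B \<phi>" by (simp add: chi_def fun_eq_iff)
    have e1: "H_L V L (chi B \<phi>) x = - (\<Sum>y | adj x y. chi B \<phi> y) + of_real (V x) * \<phi> x"
      using x unfolding H_L_def B_def[symmetric] cc by (simp add: chi_in Hop_def)
    have e2: "fscale (of_real E) (chi B \<phi>) x = - (\<Sum>y | adj x y. \<phi> y) + of_real (V x) * \<phi> x"
      using x fun_cong[OF eig, of x] unfolding Hop_def by (simp add: chi_in fscale_app)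
    have "(H_L V L (chi B \<phi>) - fscale (of_real E) (chi B \<phi>)) x
        = H_L V L (chi B \<phi>) x - fscale (of_real E) (chi B \<phi>) x" by (simp del: fscale_app)
    also have "\<dots> = (\<Sum>y | adj x y. \<phi> y) - (\<Sum>y | adj x y. chi B \<phi> y)"
      unfolding e1 e2 by simp
    also have "\<dots> = (\<Sum>y | adj x y. \<phi> y - chi B \<phi> y)" by (simp add: sum_subtractf)
    finally have "(H_L V L (chi B \<phi>) - fscale (of_real E) (chi B \<phi>)) x = (\<Sum>y | adj x y. \<phi> y - chi B \<phi> y)" .
    then have "cmod ((H_L V L (chi B \<phi>) - fscale (of_real E) (chi B \<phi>)) x)
         \<le> (\<Sum>y | adj x y. cmod (\<phi> y - chi B \<phi> y))"
      by (simp add: norm_sum)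
    also have "\<dots> \<le> (\<Sum>y | adj x y. M * (L / 2) powr (- \<beta>))"
    proof (rule sum_mono)
      fix y
      show "cmod (\<phi> y - chi B \<phi> y) \<le> M * (L / 2) powr (- \<beta>)"
      proof (cases "y \<in> B")
        case True then show ?thesis using M by (simp add: chi_def)
      next
        case False
        have "L / 2 \<le> jbr y" using jbr_out False unfolding B_def by blast
        then have "jbr y powr (- \<beta>) \<le> (L / 2) powr (- \<beta>)"
          using L b by (intro powr_mono2') auto
        then have "M * jbr y powr (- \<beta>) \<le> M * (L / 2) powr (- \<beta>)" using M by (rule mult_left_mono)
        then show ?thesis using False dec by (simp add: chi_def) (meson order_trans)
      qed
    qed
    also have "\<dots> = Q" unfolding Q_def by (simp add: card_adj)
    finally show ?thesis .
  qed
  have "nn B (H_L V L (chi B \<phi>) - fscale (of_real E) (chi B \<phi>)) \<le> (\<Sum>x\<in>B. Q^2)"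
    unfolding nn_def using pt by (intro sum_mono power_mono) auto
  also have "\<dots> = real (card B) * Q^2" by simp
  also have "\<dots> \<le> (5 * L) ^ CARD('d) * Q^2" using cB by (intro mult_right_mono) auto
  finally show ?thesis unfolding Q_def B_def .
qed

lemma indep_points:
  fixes \<phi>1 \<phi>2 :: "'a \<Rightarrow> complex"
  assumes indep: "\<forall>a b :: complex. fscale a \<phi>1 + fscale b \<phi>2 = 0 \<longrightarrow> a = 0 \<and> b = 0"
  shows "\<exists>p q. \<phi>1 p * \<phi>2 q - \<phi>2 p * \<phi>1 q \<noteq> 0"
proof (rule ccontr)
  assume "\<not> ?thesis"
  then have z: "\<phi>1 p * \<phi>2 q - \<phi>2 p * \<phi>1 q = 0" for p q by blast
  have "\<phi>1 \<noteq> 0"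
  proof
    assume "\<phi>1 = 0"
    then have h: "fscale 1 \<phi>1 + fscale 0 \<phi>2 = 0" by simp
    show False using indep[rule_format, OF h] by simp
  qed
  then obtain p where p: "\<phi>1 p \<noteq> 0" by (auto simp: fun_eq_iff)
  have h: "fscale (\<phi>2 p) \<phi>1 + fscale (- \<phi>1 p) \<phi>2 = 0"
  proof
    fix q
    show "(fscale (\<phi>2 p) \<phi>1 + fscale (- \<phi>1 p) \<phi>2) q = 0 q"
      using z[of p q] by (simp add: fscale_def algebra_simps)
  qed
  show False using indep[rule_format, OF h] p by simp
qed

lemma coef_bound:
  fixes \<phi>1 \<phi>2 :: "'a \<Rightarrow> complex"
  assumes fB: "finite B" and pq: "p \<in> B" "q \<in> B"
  and D: "\<phi>1 p * \<phi>2 q - \<phi>2 p * \<phi>1 q \<noteq> 0"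
  shows "cmod a + cmod b \<le> (cmod (\<phi>1 p) + cmod (\<phi>1 q) + cmod (\<phi>2 p) + cmod (\<phi>2 q))
          / cmod (\<phi>1 p * \<phi>2 q - \<phi>2 p * \<phi>1 q) * sqrt (nn B (fscale a (chi B \<phi>1) + fscale b (chi B \<phi>2)))"
proof -
  define w where "w = fscale a (chi B \<phi>1) + fscale b (chi B \<phi>2)"
  define s where "s = sqrt (nn B w)"
  define Dt where "Dt = \<phi>1 p * \<phi>2 q - \<phi>2 p * \<phi>1 q"
  have ws: "cmod (w x) \<le> s" if "x \<in> B" for x
  proof -
    have "(cmod (w x))^2 \<le> nn B w" unfolding nn_def using fB that
      by (intro member_le_sum) auto
    then show ?thesis unfolding s_def by (rule real_le_rsqrt)
  qed
  define up where "up = a * \<phi>1 p + b * \<phi>2 p"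
  define uq where "uq = a * \<phi>1 q + b * \<phi>2 q"
  have up: "cmod up \<le> s" using ws[OF pq(1)] pq(1) unfolding w_def up_def by (simp add: chi_def fscale_def)
  have uq: "cmod uq \<le> s" using ws[OF pq(2)] pq(2) unfolding w_def uq_def by (simp add: chi_def fscale_def)
  have "a * Dt = \<phi>2 q * up - \<phi>2 p * uq" unfolding Dt_def up_def uq_def by (simp add: algebra_simps)
  then have "cmod a * cmod Dt = cmod (\<phi>2 q * up - \<phi>2 p * uq)" by (metis norm_mult)
  also have "\<dots> \<le> cmod (\<phi>2 q * up) + cmod (\<phi>2 p * uq)" by (rule norm_triangle_ineq4)
  also have "\<dots> = cmod (\<phi>2 q) * cmod up + cmod (\<phi>2 p) * cmod uq" by (simp add: norm_mult)
  also have "\<dots> \<le> cmod (\<phi>2 q) * s + cmod (\<phi>2 p) * s"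
    using up uq by (intro add_mono mult_left_mono) auto
  finally have 1: "cmod a * cmod Dt \<le> cmod (\<phi>2 q) * s + cmod (\<phi>2 p) * s" .
  have "b * Dt = \<phi>1 p * uq - \<phi>1 q * up" unfolding Dt_def up_def uq_def by (simp add: algebra_simps)
  then have "cmod b * cmod Dt = cmod (\<phi>1 p * uq - \<phi>1 q * up)" by (metis norm_mult)
  also have "\<dots> \<le> cmod (\<phi>1 p * uq) + cmod (\<phi>1 q * up)" by (rule norm_triangle_ineq4)
  also have "\<dots> = cmod (\<phi>1 p) * cmod uq + cmod (\<phi>1 q) * cmod up" by (simp add: norm_mult)
  also have "\<dots> \<le> cmod (\<phi>1 p) * s + cmod (\<phi>1 q) * s"
    using up uq by (intro add_mono mult_left_mono) auto
  finally have 2: "cmod b * cmod Dt \<le> cmod (\<phi>1 p) * s + cmod (\<phi>1 q) * s" .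
  from 1 2 have "(cmod a + cmod b) * cmod Dt \<le> (cmod (\<phi>1 p) + cmod (\<phi>1 q) + cmod (\<phi>2 p) + cmod (\<phi>2 q)) * s"
    by (simp add: algebra_simps)
  moreover have "cmod Dt > 0" using D unfolding Dt_def by simp
  ultimately show ?thesis unfolding Dt_def[symmetric] w_def[symmetric] s_def[symmetric]
    by (simp add: field_simps)
qed



theorem lemma1:
  fixes \<beta> :: real and \<phi>1 \<phi>2 :: "int ^ 'd \<Rightarrow> complex"
  assumes beta: "\<beta> > real CARD('d) / 2"
    and l2_1: "l2 \<phi>1" and l2_2: "l2 \<phi>2"
    and dec1: "has_decay \<beta> \<phi>1" and dec2: "has_decay \<beta> \<phi>2"
    and indep: "\<forall>a b :: complex. fscale a \<phi>1 + fscale b \<phi>2 = 0 \<longrightarrow> a = 0 \<and> b = 0"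
  shows "\<exists>C :: real. \<forall>(V :: int ^ 'd \<Rightarrow> real) (E :: real).
           Hop V \<phi>1 = fscale (complex_of_real E) \<phi>1 \<and> Hop V \<phi>2 = fscale (complex_of_real E) \<phi>2 \<longrightarrow>
           (\<forall>\<^sub>F L in at_top.
              tr_spec_proj V L {E - C * L powr (- \<beta> + real CARD('d) / 2) ..
                                E + C * L powr (- \<beta> + real CARD('d) / 2)} \<ge> 2)"
proof -
  obtain C1 where C1: "\<forall>x. norm (\<phi>1 x) \<le> C1 * jbr x powr (- \<beta>)" using dec1 unfolding has_decay_def by blast
  obtain C2 where C2: "\<forall>x. norm (\<phi>2 x) \<le> C2 * jbr x powr (- \<beta>)" using dec2 unfolding has_decay_def by blast
  define Cm where "Cm = max (max C1 C2) 0"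
  have Cm0: "Cm \<ge> 0" unfolding Cm_def by simp
  have d1: "cmod (\<phi>1 x) \<le> Cm * jbr x powr (- \<beta>)" for x
    using C1 jbr_pos[of x] unfolding Cm_def
    by (meson max.cobounded1 mult_right_mono order_trans powr_ge_zero)
  have d2: "cmod (\<phi>2 x) \<le> Cm * jbr x powr (- \<beta>)" for x
    using C2 jbr_pos[of x] unfolding Cm_def
    by (meson max.cobounded1 max.cobounded2 mult_right_mono order_trans powr_ge_zero)
  obtain p q where D: "\<phi>1 p * \<phi>2 q - \<phi>2 p * \<phi>1 q \<noteq> 0" using indep_points[OF indep] by blast
  define K0 where "K0 = (cmod (\<phi>1 p) + cmod (\<phi>1 q) + cmod (\<phi>2 p) + cmod (\<phi>2 q))
          / cmod (\<phi>1 p * \<phi>2 q - \<phi>2 p * \<phi>1 q)"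
  have K00: "K0 \<ge> 0" unfolding K0_def by simp
  define C where "C = 5 powr (real CARD('d) / 2) * 2 powr \<beta> * real (Nd TYPE('d)) * K0 * Cm"
  have C0: "C \<ge> 0" unfolding C_def using K00 Cm0 by simp
  have b0: "\<beta> \<ge> 0" using beta by (smt (verit) divide_nonneg_nonneg of_nat_0_le_iff)
  show ?thesis
  proof (intro exI[of _ C] allI impI)
    fix V :: "int ^ 'd \<Rightarrow> real" and E :: real
    assume eigs: "Hop V \<phi>1 = fscale (complex_of_real E) \<phi>1 \<and> Hop V \<phi>2 = fscale (complex_of_real E) \<phi>2"
    define R where "R = max 1 (2 * (znorm p + znorm q) + 1)"
    show "\<forall>\<^sub>F L in at_top. tr_spec_proj V L {E - C * L powr (- \<beta> + real CARD('d) / 2) ..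
                                E + C * L powr (- \<beta> + real CARD('d) / 2)} \<ge> 2"
      using eventually_ge_at_top[of R]
    proof (rule eventually_mono)
      fix L assume LR: "R \<le> L"
      define B where "B = (box_L L :: (int^'d) set)"
      have L1: "L \<ge> 1" using LR unfolding R_def by simp
      have inB: "x \<in> B" if "2 * znorm x < L" for x
        unfolding B_def box_L_def using abs_le_znorm[of x] that
        by (smt (verit) mem_Collect_eq)
      have pB: "p \<in> B" using inB LR znorm_nonneg[of q] unfolding R_def by (intro inB) auto
      have qB: "q \<in> B" using inB LR znorm_nonneg[of p] unfolding R_def by (intro inB) auto
      interpret hermop B "H_L V L" unfolding B_def by (rule hermop_HL)
      define \<epsilon> where "\<epsilon> = C * L powr (- \<beta> + real CARD('d) / 2)"
      have eps0: "\<epsilon> \<ge> 0" unfolding \<epsilon>_def using C0 by simp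
      have chiSp: "chi B f \<in> Sp B" for f by (simp add: chi_def Sp_def)
      have wchi: "fscale a (chi B \<phi>1) + fscale b (chi B \<phi>2) = chi B (fscale a \<phi>1 + fscale b \<phi>2)" for a b
        by (simp only: chi_add chi_scale)
      have cb: "cmod a + cmod b \<le> K0 * sqrt (nn B (fscale a (chi B \<phi>1) + fscale b (chi B \<phi>2)))" for a b
        unfolding K0_def by (rule coef_bound[OF finB pB qB D])
      have "2 \<le> FS.dim (FS.span {f. (\<forall>x. x \<notin> B \<longrightarrow> f x = 0) \<and> f \<noteq> 0 \<and>
             (\<exists>e\<in>{E - \<epsilon>..E + \<epsilon>}. H_L V L f = fscale (complex_of_real e) f)})"
      proof (rule two_dim[OF chiSp chiSp eps0])
        show "\<forall>a b. fscale a (chi B \<phi>1) + fscale b (chi B \<phi>2) = 0 \<longrightarrow> a = 0 \<and> b = 0"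
        proof (intro allI impI)
          fix a b assume "fscale a (chi B \<phi>1) + fscale b (chi B \<phi>2) = 0"
          then have "cmod a + cmod b \<le> 0" using cb[of a b] by (simp add: nn_def)
          then show "a = 0 \<and> b = 0" by (smt (verit) norm_ge_zero norm_le_zero_iff)
        qed
        show "\<forall>a b. nn B (H_L V L (fscale a (chi B \<phi>1) + fscale b (chi B \<phi>2)) -
            fscale (complex_of_real E) (fscale a (chi B \<phi>1) + fscale b (chi B \<phi>2)))
          \<le> \<epsilon>\<^sup>2 * nn B (fscale a (chi B \<phi>1) + fscale b (chi B \<phi>2))"
        proof (intro allI)
          fix a b
          define \<phi> where "\<phi> = fscale a \<phi>1 + fscale b \<phi>2"
          define w where "w = fscale a (chi B \<phi>1) + fscale b (chi B \<phi>2)"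
          have w: "w = chi B \<phi>" unfolding w_def \<phi>_def by (rule wchi)
          have eig: "Hop V \<phi> = fscale (of_real E) \<phi>"
            unfolding \<phi>_def Hop_add Hop_scale using eigs by (simp add: fscale_def fun_eq_iff algebra_simps)
          define M where "M = (cmod a + cmod b) * Cm"
          have M0: "M \<ge> 0" unfolding M_def using Cm0 by simp
          have dec: "\<forall>y. cmod (\<phi> y) \<le> M * jbr y powr (- \<beta>)"
          proof
            fix y
            have "cmod (\<phi> y) \<le> cmod a * cmod (\<phi>1 y) + cmod b * cmod (\<phi>2 y)"
              unfolding \<phi>_def by (simp add: fscale_def) (metis norm_mult norm_triangle_ineq)
            also have "\<dots> \<le> cmod a * (Cm * jbr y powr (- \<beta>)) + cmod b * (Cm * jbr y powr (- \<beta>))"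
              using d1 d2 by (intro add_mono mult_left_mono) auto
            also have "\<dots> = M * jbr y powr (- \<beta>)" unfolding M_def by (simp add: algebra_simps)
            finally show "cmod (\<phi> y) \<le> M * jbr y powr (- \<beta>)" .
          qed
          have bd: "nn B (H_L V L w - fscale (of_real E) w)
             \<le> (5 * L) ^ CARD('d) * (real (Nd TYPE('d)) * M * (L / 2) powr (- \<beta>))^2"
            unfolding w B_def by (rule boundary[OF eig dec M0 b0 L1])
          have MK: "M \<le> K0 * Cm * sqrt (nn B w)"
            using cb[of a b] Cm0 unfolding M_def w_def
            by (metis mult.commute mult.left_commute mult_right_mono)
          have "(real (Nd TYPE('d)) * M * (L / 2) powr (- \<beta>))^2
              \<le> (real (Nd TYPE('d)) * (K0 * Cm * sqrt (nn B w)) * (L / 2) powr (- \<beta>))^2"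
            using MK M0 by (intro power_mono mult_right_mono mult_left_mono) auto
          also have "\<dots> = (real (Nd TYPE('d)) * K0 * Cm)^2 * nn B w * ((L / 2) powr (- \<beta>))^2"
            using nn_nonneg[of B w] by (simp add: power_mult_distrib)
          finally have "(5 * L) ^ CARD('d) * (real (Nd TYPE('d)) * M * (L / 2) powr (- \<beta>))^2
              \<le> (5 * L) ^ CARD('d) * ((real (Nd TYPE('d)) * K0 * Cm)^2 * nn B w * ((L / 2) powr (- \<beta>))^2)"
            using L1 by (intro mult_left_mono) auto
          also have "\<dots> = (real (Nd TYPE('d)) * K0 * Cm)^2 * nn B w * ((5 * L) ^ CARD('d) * ((L / 2) powr (- \<beta>))^2)"
            by (simp add: algebra_simps)
          also have "\<dots> = (real (Nd TYPE('d)) * K0 * Cm)^2 * nn B w *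
              (5 powr (real CARD('d) / 2) * 2 powr \<beta> * L powr (- \<beta> + real CARD('d) / 2))^2"
            using L1 by (simp only: powr_ident[of L "CARD('d)" \<beta>] less_le_trans[OF zero_less_one])
          also have "\<dots> = \<epsilon>^2 * nn B w"
            unfolding \<epsilon>_def C_def by (simp add: power_mult_distrib algebra_simps)
          finally show "nn B (H_L V L w - fscale (of_real E) w) \<le> \<epsilon>^2 * nn B w"
            using bd by linarith
        qed
      qed
      then show "tr_spec_proj V L {E - C * L powr (- \<beta> + real CARD('d) / 2) ..
                                E + C * L powr (- \<beta> + real CARD('d) / 2)} \<ge> 2"
        unfolding tr_spec_proj_def \<epsilon>_def B_def .
    qed
  qed
qed


end
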